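(* Let $M=\mathbb{C}^n=C(X_n)$ and let $\mathcal{F}$ be a finite set of bijections $X_n\to X_n$, $X_n=\{1,\dots,n\}$. Let $B=\mathbb{C}^{|\mathcal{F}|}$ and let $\Psi_B:M\to M\otimes B$ be $\Psi_B(e_j)=\sum_{\sigma\in\mathcal{F}}e_{\sigma(j)}\otimes\delta_\sigma$. Then, with $a_{i,j}$ the generators of $\mathbb{A}$ described below, the ideal $\mathcal{J}$ of $\mathbb{A}$ defining the quantum commutant is generated by $$\{a_{i,\sigma(j)}-a_{\sigma^{-1}(i),j}\ :\ 1\le i,j\le n,\ \sigma\in\mathcal{F}\}.$$ Consequently the $\mathrm{C}^*$-algebra $A$ of $\mathrm{QMap}_{\mathcal F}(X_n)$ is the universal unital $\mathrm{C}^*$-algebra generated by elements $a_{i,j}$ ($i,j=1,\dots,n$) satisfying $a_{i,j}^*a_{i,j}=a_{i,j}$, $\sum_{j}a_{i,j}=\mathbb{1}$ for all $i$, and $$a_{\sigma(i),\sigma(j)}=a_{i,j}\qquad (i,j=1,\dots,n,\ \sigma\in\mathcal{F}).$$ Moreover, the quantum commutant of $\mathcal{F}$ coincides with the quantum commutant of the group of bijections generated by $\mathcal{F}$.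
   Context: All $\mathrm{C}^*$-algebras are unital, tensor products are minimal, morphisms are unital $*$-homomorphisms. For a finite-dimensional $\mathrm{C}^*$-algebra $M$, a quantum family of maps labelled by $B$ is a unital $*$-homomorphism $M\to M\otimes B$; $(\mathbb{A},\mathbb{\Phi})$ denotes the quantum family of all maps (the universal one: every unital $*$-homomorphism $\Psi_B:M\to M\otimes B$ equals $(\mathrm{id}_M\otimes\Lambda)\circ\mathbb{\Phi}$ for a unique unital $*$-homomorphism $\Lambda:\mathbb{A}\to B$), with comultiplication $\mathbb{\Delta}$ determined by $(\mathrm{id}_M\otimes\mathbb{\Delta})\mathbb{\Phi}=(\mathbb{\Phi}\otimes\mathrm{id})\mathbb{\Phi}$ and counit $\mathbb{\epsilon}$ determined by $(\mathrm{id}_M\otimes\mathbb{\epsilon})\mathbb{\Phi}=\mathrm{id}_M$. For $M=\mathbb{C}^n$ with standard basis $e_1,\dots,e_n$, $\mathbb{A}$ is the universal unital $\mathrm{C}^*$-algebra generated by $a_{i,j}$ ($1\le i,j\le n$) with $a_{i,j}^*a_{i,j}=a_{i,j}$ and $\sum_j a_{i,j}=\mathbb{1}$, and $\mathbb{\Phi}(e_j)=\sum_i e_i\otimes a_{i,j}$, $\mathbb{\Delta}(a_{i,j})=\sum_k a_{i,k}\otimes a_{k,j}$. Quantum commutant: given $\Psi_B:M\to M\otimes B$, let $\mathcal{J}$ be the closed two-sided ideal of $\mathbb{A}$ generated by $\{(\omega\otimes\mathrm{id}_{\mathbb{A}}\otimes\eta)((\mathbb{\Phi}\otimes\mathrm{id}_B)\Psi_B(m))-(\omega\otimes\eta\otimes\mathrm{id}_{\mathbb{A}})((\Psi_B\otimes\mathrm{id}_{\mathbb{A}})\mathbb{\Phi}(m))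 : m\in M,\ \omega\in M^*,\ \eta\in B^*\}$; $A=\mathbb{A}/\mathcal{J}$ with quotient map $\pi$, $\Phi=(\mathrm{id}_M\otimes\pi)\mathbb{\Phi}$, and $\Delta$ the comultiplication on $A$ with $\Delta\circ\pi=(\pi\otimes\pi)\circ\mathbb{\Delta}$. The pair $(A,\Delta)$ is the quantum commutant $\mathrm{QMap}_{\Psi_B}(\mathrm{Qs}(M))$; $\Phi$ is the universal quantum family of maps commuting with $\Psi_B$, where $\Phi_C:M\to M\otimes C$ commutes with $\Psi_B$ iff $(\Phi_C\otimes\mathrm{id}_B)\Psi_B=(\mathrm{id}_M\otimes\mathrm{flip})(\Psi_B\otimes\mathrm{id}_C)\Phi_C$. For a classical finite family $\mathcal{F}$ of maps $X_n\to X_n$, $\delta_\sigma\in\mathbb{C}^{|\mathcal F|}=C(\mathcal F)$ is the indicator function of $\sigma$, and $\mathrm{QMap}_{\mathcal{F}}(X_n)$ denotes the quantum commutant of the associated $\Psi_B$. *)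

theory Defs
  imports Complex_Main "HOL-Combinatorics.Permutations"
begin

class cstar_algebra = real_normed_algebra_1 + banach +
  fixes scaleC :: "complex \<Rightarrow> 'a \<Rightarrow> 'a"
    and cstar :: "'a \<Rightarrow> 'a"
  assumes scaleC_add_right: "scaleC c (x + y) = scaleC c x + scaleC c y"
    and scaleC_add_left: "scaleC (c + d) x = scaleC c x + scaleC d x"
    and scaleC_scaleC: "scaleC c (scaleC d x) = scaleC (c * d) x"
    and scaleC_one: "scaleC 1 x = x"
    and scaleR_scaleC: "scaleR r x = scaleC (complex_of_real r) x"
    and scaleC_mult_left: "scaleC c (x * y) = scaleC c x * y"
    and scaleC_mult_right: "scaleC c (x * y) = x * scaleC c y"
    and norm_scaleC: "norm (scaleC c x) = cmod c * norm x"
    and cstar_cstar: "cstar (cstar x) = x"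
    and cstar_add: "cstar (x + y) = cstar x + cstar y"
    and cstar_scaleC: "cstar (scaleC c x) = scaleC (cnj c) (cstar x)"
    and cstar_mult: "cstar (x * y) = cstar y * cstar x"
    and cstar_identity: "norm (cstar x * x) = (norm x)\<^sup>2"

definition closed_ideal :: "'a::cstar_algebra set \<Rightarrow> bool" where
  "closed_ideal I \<longleftrightarrow> 0 \<in> I \<and> (\<forall>x\<in>I. \<forall>y\<in>I. x + y \<in> I)
     \<and> (\<forall>c. \<forall>x\<in>I. scaleC c x \<in> I)
     \<and> (\<forall>x\<in>I. \<forall>y. y * x \<in> I \<and> x * y \<in> I) \<and> closed I"

definition closed_ideal_gen :: "'a::cstar_algebra set \<Rightarrow> 'a set" where
  "closed_ideal_gen S = \<Inter>{I. S \<subseteq> I \<and> closed_ideal I}"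

text \<open>
  M = C^n is modelled by functions nat => complex (only coordinates 1..n matter),
  basis vector e_j = (\<lambda>k. if k = j then 1 else 0).
  B = C^|F| = C(F) is modelled by functions on F, basis delta_sigma.
  M \<otimes> B has coordinates (k, sigma); M \<otimes> A \<otimes> B (and M \<otimes> B \<otimes> A) has
  A-valued coordinates (i, sigma).
\<close>

definition basis_vec :: "nat \<Rightarrow> nat \<Rightarrow> complex" where
  "basis_vec j = (\<lambda>k. if k = j then 1 else 0)"

text \<open>Psi_B(m), with Psi_B(e_j) = sum_{sigma in F} e_{sigma j} \<otimes> delta_sigma, extended linearly.\<close>
definition PsiB :: "nat \<Rightarrow> (nat \<Rightarrow> nat) set \<Rightarrow> (nat \<Rightarrow> complex) \<Rightarrow> nat \<Rightarrow> (nat \<Rightarrow> nat) \<Rightarrow> complex" where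
  "PsiB n F m = (\<lambda>k \<sigma>. if \<sigma> \<in> F then (\<Sum>j\<in>{1..n}. m j * (if \<sigma> j = k then 1 else 0)) else 0)"

text \<open>The universal family Phi(m), with Phi(e_j) = sum_i e_i \<otimes> a_{i,j}, extended linearly.\<close>
definition PhiA :: "nat \<Rightarrow> (nat \<Rightarrow> nat \<Rightarrow> 'a::cstar_algebra) \<Rightarrow> (nat \<Rightarrow> complex) \<Rightarrow> nat \<Rightarrow> 'a" where
  "PhiA n a m = (\<lambda>i. \<Sum>j\<in>{1..n}. scaleC (m j) (a i j))"

text \<open>(Phi \<otimes> id_B) Psi_B(m) in M \<otimes> A \<otimes> B.\<close>
definition lhs_tensor :: "nat \<Rightarrow> (nat \<Rightarrow> nat) set \<Rightarrow> (nat \<Rightarrow> nat \<Rightarrow> 'a::cstar_algebra) \<Rightarrow> (nat \<Rightarrow> complex) \<Rightarrow> nat \<Rightarrow> (nat \<Rightarrow> nat) \<Rightarrow> 'a" where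
  "lhs_tensor n F a m = (\<lambda>i \<sigma>. \<Sum>k\<in>{1..n}. scaleC (PsiB n F m k \<sigma>) (a i k))"

text \<open>(Psi_B \<otimes> id_A) Phi(m) in M \<otimes> B \<otimes> A.\<close>
definition rhs_tensor :: "nat \<Rightarrow> (nat \<Rightarrow> nat) set \<Rightarrow> (nat \<Rightarrow> nat \<Rightarrow> 'a::cstar_algebra) \<Rightarrow> (nat \<Rightarrow> complex) \<Rightarrow> nat \<Rightarrow> (nat \<Rightarrow> nat) \<Rightarrow> 'a" where
  "rhs_tensor n F a m = (\<lambda>i \<sigma>. \<Sum>k\<in>{1..n}. scaleC (PsiB n F (basis_vec k) i \<sigma>) (PhiA n a m k))"

text \<open>Slice map by omega in M^* (given by w) and eta in B^* (given by v).\<close>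
definition slice :: "nat \<Rightarrow> (nat \<Rightarrow> nat) set \<Rightarrow> (nat \<Rightarrow> complex) \<Rightarrow> ((nat \<Rightarrow> nat) \<Rightarrow> complex) \<Rightarrow> (nat \<Rightarrow> (nat \<Rightarrow> nat) \<Rightarrow> 'a::cstar_algebra) \<Rightarrow> 'a" where
  "slice n F w v X = (\<Sum>i\<in>{1..n}. \<Sum>\<sigma>\<in>F. scaleC (w i * v \<sigma>) (X i \<sigma>))"

definition qcomm_ideal :: "nat \<Rightarrow> (nat \<Rightarrow> nat) set \<Rightarrow> (nat \<Rightarrow> nat \<Rightarrow> 'a::cstar_algebra) \<Rightarrow> 'a set" where
  "qcomm_ideal n F a = closed_ideal_gen
     {slice n F w v (lhs_tensor n F a m) - slice n F w v (rhs_tensor n F a m) | m w v. True}"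

inductive_set perm_group_gen :: "(nat \<Rightarrow> nat) set \<Rightarrow> (nat \<Rightarrow> nat) set" for F where
  pg_id: "id \<in> perm_group_gen F"
| pg_gen: "\<sigma> \<in> F \<Longrightarrow> \<sigma> \<in> perm_group_gen F"
| pg_comp: "\<sigma> \<in> perm_group_gen F \<Longrightarrow> \<tau> \<in> perm_group_gen F \<Longrightarrow> \<sigma> \<circ> \<tau> \<in> perm_group_gen F"
| pg_inv: "\<sigma> \<in> perm_group_gen F \<Longrightarrow> inv \<sigma> \<in> perm_group_gen F"

end

theory Submission
  imports Defs
begin

lemma scaleC_zero_left: "scaleC 0 (x::'a::cstar_algebra) = 0"
  using scaleR_scaleC[of 0 x] by simp

lemma scaleC_zero_right: "scaleC c (0::'a::cstar_algebra) = 0"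
  using scaleC_add_right[of c 0 0] by simp

lemma scaleC_diff_right: "scaleC c ((x::'a::cstar_algebra) - y) = scaleC c x - scaleC c y"
  using scaleC_add_right[of c "x - y" y] by (simp add: algebra_simps)

lemma scaleC_neg_one: "scaleC (-1) (x::'a::cstar_algebra) = - x"
  using scaleR_scaleC[of "-1" x] by simp

lemma scaleC_sum_right: "scaleC c (sum f A) = (\<Sum>x\<in>A. scaleC c (f x::'a::cstar_algebra))"
  by (induction A rule: infinite_finite_induct) (auto simp: scaleC_zero_right scaleC_add_right)

lemma scaleC_sum_left: "scaleC (sum f A) (x::'a::cstar_algebra) = (\<Sum>y\<in>A. scaleC (f y) x)"
  by (induction A rule: infinite_finite_induct) (auto simp: scaleC_zero_left scaleC_add_left)

lemma scaleC_if: "scaleC (if P then c else 0) (x::'a::cstar_algebra) = (if P then scaleC c x else 0)"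
  by (simp add: scaleC_zero_left)

lemma closed_ideal_gen_ideal: "closed_ideal (closed_ideal_gen (S::'a::cstar_algebra set))"
  unfolding closed_ideal_gen_def closed_ideal_def
  by (auto intro!: closed_Inter)

lemma closed_ideal_gen_sub: "S \<subseteq> closed_ideal_gen S"
  unfolding closed_ideal_gen_def by auto

lemma closed_ideal_gen_least: "S \<subseteq> I \<Longrightarrow> closed_ideal I \<Longrightarrow> closed_ideal_gen S \<subseteq> I"
  unfolding closed_ideal_gen_def by auto

lemma closed_ideal_gen_eqI:
  "S \<subseteq> closed_ideal_gen T \<Longrightarrow> T \<subseteq> closed_ideal_gen S \<Longrightarrow> closed_ideal_gen S = closed_ideal_gen (T::'a::cstar_algebra set)"
  by (meson closed_ideal_gen_ideal closed_ideal_gen_least subset_antisym)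

lemma ci_add: "closed_ideal I \<Longrightarrow> x \<in> I \<Longrightarrow> y \<in> I \<Longrightarrow> x + y \<in> I"
  unfolding closed_ideal_def by auto

lemma ci_scale: "closed_ideal I \<Longrightarrow> x \<in> I \<Longrightarrow> scaleC c x \<in> I"
  unfolding closed_ideal_def by auto

lemma ci_zero: "closed_ideal I \<Longrightarrow> 0 \<in> I"
  unfolding closed_ideal_def by auto

lemma ci_neg: "closed_ideal I \<Longrightarrow> x \<in> I \<Longrightarrow> - x \<in> I"
  using ci_scale[of I x "-1"] by (simp add: scaleC_neg_one)

lemma ci_sum: "closed_ideal I \<Longrightarrow> (\<And>x. x \<in> A \<Longrightarrow> f x \<in> I) \<Longrightarrow> sum f A \<in> I"
  by (induction A rule: infinite_finite_induct) (auto intro: ci_zero ci_add)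


lemma T1:
  assumes "\<sigma> permutes {1..n}" "\<sigma> \<in> F"
  shows "PsiB n F m k \<sigma> = (\<Sum>j\<in>{1..n}. if \<sigma> j = k then m j else 0)"
      unfolding PsiB_def if_P[OF assms(2)] by (rule sum.cong) simp_all

lemma T2:
  assumes "\<sigma> permutes {1..n}" "\<sigma> \<in> F"
  shows "lhs_tensor n F a m i \<sigma> = (\<Sum>k\<in>{1..n}. \<Sum>j\<in>{1..n}. scaleC (if \<sigma> j = k then m j else 0) (a i k))"
  unfolding lhs_tensor_def T1[OF assms] scaleC_sum_left by (rule refl)

lemma T3:
  fixes n :: nat and a :: "nat \<Rightarrow> nat \<Rightarrow> 'a::cstar_algebra"
  assumes "\<sigma> permutes {1..n}" "j \<in> {1..n}"
  shows "(\<Sum>k\<in>{1..n}. scaleC (if \<sigma> j = k then m j else 0) (a i k)) = scaleC (m j) (a i (\<sigma> j))"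
proof -
  have sj: "\<sigma> j \<in> {1..n}" using permutes_in_image[OF assms(1), of j] assms(2) by (rule iffD2)
  have "(\<Sum>k\<in>{1..n}. scaleC (if \<sigma> j = k then m j else 0) (a i k)) =
        (\<Sum>k\<in>{1..n}. if \<sigma> j = k then scaleC (m j) (a i k) else 0)"
    by (simp only: scaleC_if)
  also have "\<dots> = scaleC (m j) (a i (\<sigma> j))"
    using sj by (subst sum.delta') auto
  finally show ?thesis .
qed
lemma lhs_eq:
  assumes "\<sigma> permutes {1..n}" "\<sigma> \<in> F"
  shows "lhs_tensor n F a m i \<sigma> = (\<Sum>j\<in>{1..n}. scaleC (m j) (a i (\<sigma> j)))"
proof -
  have "lhs_tensor n F a m i \<sigma> = (\<Sum>j\<in>{1..n}. \<Sum>k\<in>{1..n}. scaleC (if \<sigma> j = k then m j else 0) (a i k))"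
    unfolding T2[OF assms] by (rule sum.swap)
  also have "\<dots> = (\<Sum>j\<in>{1..n}. scaleC (m j) (a i (\<sigma> j)))"
    by (rule sum.cong[OF refl], rule T3[OF assms(1)])
  finally show ?thesis .
qed

lemma rhs_eq:
  assumes "\<sigma> permutes {1..n}" "\<sigma> \<in> F" "i \<in> {1..n}"
  shows "rhs_tensor n F a m i \<sigma> = (\<Sum>j\<in>{1..n}. scaleC (m j) (a (inv \<sigma> i) j))"
proof -
  have "rhs_tensor n F a m i \<sigma> = (\<Sum>k\<in>{1..n}. scaleC (if k = inv \<sigma> i then 1 else 0) (PhiA n a m k))"
    unfolding rhs_tensor_def
  proof (rule sum.cong[OF refl])
    fix k assume k: "k \<in> {1..n}"
    have "PsiB n F (basis_vec k) i \<sigma> = (if \<sigma> k = i then 1 else 0)"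
    proof -
      have "(\<Sum>j\<in>{1..n}. basis_vec k j * (if \<sigma> j = i then 1 else 0)) =
            (\<Sum>j\<in>{1..n}. if j = k then (if \<sigma> k = i then 1 else 0) else (0::complex))"
        by (rule sum.cong) (auto simp: basis_vec_def)
      also have "\<dots> = (if \<sigma> k = i then 1 else 0)" using k by simp
      finally show ?thesis unfolding PsiB_def using assms(2) by simp
    qed
    moreover have "(\<sigma> k = i) = (k = inv \<sigma> i)"
      using assms(1) by (metis permutes_inverses(1) permutes_inverses(2))
    ultimately show "scaleC (PsiB n F (basis_vec k) i \<sigma>) (PhiA n a m k) =
        scaleC (if k = inv \<sigma> i then 1 else 0) (PhiA n a m k)" by simp
  qed
  also have "\<dots> = PhiA n a m (inv \<sigma> i)"
  proof -
    have "inv \<sigma> i \<in> {1..n}" using assms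
      by (meson permutes_in_image permutes_inv)
    then show ?thesis by (simp add: scaleC_if scaleC_one sum.delta')
  qed
  finally show ?thesis unfolding PhiA_def .
qed


lemma slice_diff:
  assumes "\<forall>\<sigma>\<in>F. \<sigma> permutes {1..n}"
  shows "slice n F w v (lhs_tensor n F a m) - slice n F w v (rhs_tensor n F a m) =
     (\<Sum>i\<in>{1..n}. \<Sum>\<sigma>\<in>F. scaleC (w i * v \<sigma>)
        (\<Sum>j\<in>{1..n}. scaleC (m j) (a i (\<sigma> j) - a (inv \<sigma> i) j)))"
  unfolding slice_def sum_subtractf[symmetric] scaleC_diff_right[symmetric]
proof (intro sum.cong refl)
  fix i \<sigma> assume i: "i \<in> {1..n}" and s: "\<sigma> \<in> F"
  have p: "\<sigma> permutes {1..n}" using assms s by blast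
  show "scaleC (w i * v \<sigma>) (lhs_tensor n F a m i \<sigma> - rhs_tensor n F a m i \<sigma>) =
      scaleC (w i * v \<sigma>) (\<Sum>j\<in>{1..n}. scaleC (m j) (a i (\<sigma> j) - a (inv \<sigma> i) j))"
    by (simp only: lhs_eq[OF p s] rhs_eq[OF p s i] scaleC_diff_right sum_subtractf)
qed

lemma qcomm_D:
  assumes fin: "finite F" and perm: "\<forall>\<sigma>\<in>F. \<sigma> permutes {1..n}"
  shows "qcomm_ideal n F a = closed_ideal_gen
           {a i (\<sigma> j) - a (inv \<sigma> i) j | i j \<sigma>. i \<in> {1..n} \<and> j \<in> {1..n} \<and> \<sigma> \<in> F}"
  (is "_ = closed_ideal_gen ?D")
  unfolding qcomm_ideal_def
proof (rule closed_ideal_gen_eqI)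
  let ?I = "closed_ideal_gen ?D"
  have ci: "closed_ideal ?I" by (rule closed_ideal_gen_ideal)
  show "{slice n F w v (lhs_tensor n F a m) - slice n F w v (rhs_tensor n F a m) | m w v. True} \<subseteq> ?I"
  proof clarify
    fix m w v
    show "slice n F w v (lhs_tensor n F a m) - slice n F w v (rhs_tensor n F a m) \<in> ?I"
      unfolding slice_diff[OF perm]
      apply (intro ci_sum[OF ci] ci_scale[OF ci])
      apply (rule closed_ideal_gen_sub[THEN subsetD])
      by blast
  qed
  show "?D \<subseteq> closed_ideal_gen {slice n F w v (lhs_tensor n F a m) - slice n F w v (rhs_tensor n F a m) | m w v. True}"
  proof (rule subsetI, rule closed_ideal_gen_sub[THEN subsetD])
    fix x assume "x \<in> ?D"
    then obtain i0 j0 \<sigma>0 where x: "x = a i0 (\<sigma>0 j0) - a (inv \<sigma>0 i0) j0"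
      and i0: "i0 \<in> {1..n}" and j0: "j0 \<in> {1..n}" and s0: "\<sigma>0 \<in> F" by blast
    define v where "v = (\<lambda>\<tau>. if \<tau> = \<sigma>0 then (1::complex) else 0)"
    have "slice n F (basis_vec i0) v (lhs_tensor n F a (basis_vec j0)) -
          slice n F (basis_vec i0) v (rhs_tensor n F a (basis_vec j0)) = x"
    proof -
      have inner: "(\<Sum>j\<in>{1..n}. scaleC (basis_vec j0 j) (a i (\<sigma> j) - a (inv \<sigma> i) j))
          = a i (\<sigma> j0) - a (inv \<sigma> i) j0" for i \<sigma>
        using j0 by (simp add: basis_vec_def scaleC_if scaleC_one)
      have "(\<Sum>i\<in>{1..n}. \<Sum>\<sigma>\<in>F. scaleC (basis_vec i0 i * v \<sigma>)
              (a i (\<sigma> j0) - a (inv \<sigma> i) j0)) = x"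
      proof -
        have e: "scaleC (basis_vec i0 i * v \<sigma>) X = (if \<sigma> = \<sigma>0 then (if i = i0 then X else 0) else 0)"
          for i \<sigma> and X :: 'a
          by (simp add: basis_vec_def v_def scaleC_zero_left scaleC_one)
        show ?thesis unfolding e using i0 s0 fin by (simp add: sum.delta' x)
      qed
      then show ?thesis unfolding slice_diff[OF perm] inner .
    qed
    then show "x \<in> {slice n F w v (lhs_tensor n F a m) - slice n F w v (rhs_tensor n F a m) | m w v. True}"
      by blast
  qed
qed

lemma D_eq_D2:
  fixes n :: nat and F :: "(nat \<Rightarrow> nat) set" and a :: "nat \<Rightarrow> nat \<Rightarrow> 'a::cstar_algebra"
  assumes perm: "\<forall>\<sigma>\<in>F. \<sigma> permutes {1..n}"
  shows "{a i (\<sigma> j) - a (inv \<sigma> i) j | i j \<sigma>. i \<in> {1..n} \<and> j \<in> {1..n} \<and> \<sigma> \<in> F}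
       = {a (\<sigma> i) (\<sigma> j) - a i j | i j \<sigma>. i \<in> {1..n} \<and> j \<in> {1..n} \<and> \<sigma> \<in> F}"
proof (intro equalityI subsetI)
  fix x assume "x \<in> {a i (\<sigma> j) - a (inv \<sigma> i) j | i j \<sigma>. i \<in> {1..n} \<and> j \<in> {1..n} \<and> \<sigma> \<in> F}"
  then obtain i j \<sigma> where x: "x = a i (\<sigma> j) - a (inv \<sigma> i) j" and h: "i \<in> {1..n}" "j \<in> {1..n}" "\<sigma> \<in> F" by blast
  have p: "\<sigma> permutes {1..n}" using perm h by blast
  have "inv \<sigma> i \<in> {1..n}" using p h by (meson permutes_in_image permutes_inv)
  moreover have "\<sigma> (inv \<sigma> i) = i" using p by (simp add: permutes_inverses(1))
  ultimately have "x = a (\<sigma> (inv \<sigma> i)) (\<sigma> j) - a (inv \<sigma> i) j \<and> inv \<sigma> i \<in> {1..n}" using x by simp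
  then show "x \<in> {a (\<sigma> i) (\<sigma> j) - a i j | i j \<sigma>. i \<in> {1..n} \<and> j \<in> {1..n} \<and> \<sigma> \<in> F}"
    using h by blast
next
  fix x assume "x \<in> {a (\<sigma> i) (\<sigma> j) - a i j | i j \<sigma>. i \<in> {1..n} \<and> j \<in> {1..n} \<and> \<sigma> \<in> F}"
  then obtain i j \<sigma> where x: "x = a (\<sigma> i) (\<sigma> j) - a i j" and h: "i \<in> {1..n}" "j \<in> {1..n}" "\<sigma> \<in> F" by blast
  have p: "\<sigma> permutes {1..n}" using perm h by blast
  have "\<sigma> i \<in> {1..n}" using p h by (meson permutes_in_image)
  moreover have "inv \<sigma> (\<sigma> i) = i" using p by (simp add: permutes_inverses(2))
  ultimately have "x = a (\<sigma> i) (\<sigma> j) - a (inv \<sigma> (\<sigma> i)) j \<and> \<sigma> i \<in> {1..n}" using x by simp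
  then show "x \<in> {a i (\<sigma> j) - a (inv \<sigma> i) j | i j \<sigma>. i \<in> {1..n} \<and> j \<in> {1..n} \<and> \<sigma> \<in> F}"
    using h by blast
qed

lemma pg_perm: "\<sigma> \<in> perm_group_gen F \<Longrightarrow> \<forall>\<tau>\<in>F. \<tau> permutes S \<Longrightarrow> \<sigma> permutes S"
proof (induction rule: perm_group_gen.induct)
  case pg_id show ?case by (rule permutes_id)
next
  case (pg_gen \<sigma>) then show ?case by blast
next
  case (pg_comp \<sigma> \<tau>) then show ?case by (intro permutes_compose) simp_all
next
  case (pg_inv \<sigma>) then show ?case by (intro permutes_inv) simp
qed

lemma pg_in:
  fixes n :: nat and F :: "(nat \<Rightarrow> nat) set" and a :: "nat \<Rightarrow> nat \<Rightarrow> 'a::cstar_algebra"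
  assumes perm: "\<forall>\<tau>\<in>F. \<tau> permutes {1..n}"
  shows "\<sigma> \<in> perm_group_gen F \<Longrightarrow> \<forall>i\<in>{1..n}. \<forall>j\<in>{1..n}. a (\<sigma> i) (\<sigma> j) - a i j \<in>
     closed_ideal_gen {a (\<sigma> i) (\<sigma> j) - a i j | i j \<sigma>. i \<in> {1..n} \<and> j \<in> {1..n} \<and> \<sigma> \<in> F}"
proof (induction rule: perm_group_gen.induct)
  let ?I = "closed_ideal_gen {a (\<sigma> i) (\<sigma> j) - a i j | i j \<sigma>. i \<in> {1..n} \<and> j \<in> {1..n} \<and> \<sigma> \<in> F}"
  have ci: "closed_ideal ?I" by (rule closed_ideal_gen_ideal)
  {
    case pg_id
    then show ?case using ci_zero[OF ci] by simp
  next
    case (pg_gen \<sigma>)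
    then show ?case by (intro ballI closed_ideal_gen_sub[THEN subsetD]) blast
  next
    case (pg_comp \<sigma> \<tau>)
    have pt: "\<tau> permutes {1..n}" using pg_perm[OF pg_comp.hyps(2) perm] .
    show ?case
    proof (intro ballI)
      fix i j assume h: "i \<in> {1..n}" "j \<in> {1..n}"
      have "\<tau> i \<in> {1..n}" "\<tau> j \<in> {1..n}" using pt h by (meson permutes_in_image)+
      then have "(a (\<sigma> (\<tau> i)) (\<sigma> (\<tau> j)) - a (\<tau> i) (\<tau> j)) + (a (\<tau> i) (\<tau> j) - a i j) \<in> ?I"
        using pg_comp.IH h by (intro ci_add[OF ci]) auto
      then show "a ((\<sigma> \<circ> \<tau>) i) ((\<sigma> \<circ> \<tau>) j) - a i j \<in> ?I" by simp
    qed
  next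
    case (pg_inv \<sigma>)
    have ps: "\<sigma> permutes {1..n}" using pg_perm[OF pg_inv.hyps(1) perm] .
    show ?case
    proof (intro ballI)
      fix i j assume h: "i \<in> {1..n}" "j \<in> {1..n}"
      have hi: "inv \<sigma> i \<in> {1..n}" "inv \<sigma> j \<in> {1..n}" using ps h
        by (meson permutes_in_image permutes_inv)+
      have "- (a (\<sigma> (inv \<sigma> i)) (\<sigma> (inv \<sigma> j)) - a (inv \<sigma> i) (inv \<sigma> j)) \<in> ?I"
        using pg_inv.IH hi by (intro ci_neg[OF ci]) auto
      then show "a (inv \<sigma> i) (inv \<sigma> j) - a i j \<in> ?I"
        using ps by (simp add: permutes_inverses(1))
    qed
  }
qed

theorem proposition3p2:
  fixes n :: nat and F :: "(nat \<Rightarrow> nat) set" and a :: "nat \<Rightarrow> nat \<Rightarrow> 'a::cstar_algebra"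
  assumes "finite F"
    and "\<forall>\<sigma>\<in>F. \<sigma> permutes {1..n}"
    and "\<forall>i\<in>{1..n}. \<forall>j\<in>{1..n}. cstar (a i j) * a i j = a i j"
    and "\<forall>i\<in>{1..n}. (\<Sum>j\<in>{1..n}. a i j) = 1"
  shows "qcomm_ideal n F a = closed_ideal_gen
           {a i (\<sigma> j) - a (inv \<sigma> i) j | i j \<sigma>. i \<in> {1..n} \<and> j \<in> {1..n} \<and> \<sigma> \<in> F}
       \<and> qcomm_ideal n F a = closed_ideal_gen
           {a (\<sigma> i) (\<sigma> j) - a i j | i j \<sigma>. i \<in> {1..n} \<and> j \<in> {1..n} \<and> \<sigma> \<in> F}
       \<and> qcomm_ideal n F a = qcomm_ideal n (perm_group_gen F) a"
proof -
  let ?G = "perm_group_gen F"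
  have pG: "\<forall>\<sigma>\<in>?G. \<sigma> permutes {1..n}" using pg_perm assms(2) by blast
  have fG: "finite ?G"
    by (rule finite_subset[OF _ finite_permutations[of "{1..n}"]]) (use pG in auto)
  have 1: "qcomm_ideal n F a = closed_ideal_gen
           {a i (\<sigma> j) - a (inv \<sigma> i) j | i j \<sigma>. i \<in> {1..n} \<and> j \<in> {1..n} \<and> \<sigma> \<in> F}"
    by (rule qcomm_D[OF assms(1,2)])
  have 2: "qcomm_ideal n F a = closed_ideal_gen
           {a (\<sigma> i) (\<sigma> j) - a i j | i j \<sigma>. i \<in> {1..n} \<and> j \<in> {1..n} \<and> \<sigma> \<in> F}"
    using 1 D_eq_D2[OF assms(2), of a] by (simp only:)
  have 3: "qcomm_ideal n ?G a = closed_ideal_gen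
           {a (\<sigma> i) (\<sigma> j) - a i j | i j \<sigma>. i \<in> {1..n} \<and> j \<in> {1..n} \<and> \<sigma> \<in> ?G}"
    using qcomm_D[OF fG pG, of a] D_eq_D2[OF pG, of a] by (simp only:)
  have 4: "closed_ideal_gen
           {a (\<sigma> i) (\<sigma> j) - a i j | i j \<sigma>. i \<in> {1..n} \<and> j \<in> {1..n} \<and> \<sigma> \<in> F}
         = closed_ideal_gen
           {a (\<sigma> i) (\<sigma> j) - a i j | i j \<sigma>. i \<in> {1..n} \<and> j \<in> {1..n} \<and> \<sigma> \<in> ?G}"
  proof (rule closed_ideal_gen_eqI)
    show "{a (\<sigma> i) (\<sigma> j) - a i j | i j \<sigma>. i \<in> {1..n} \<and> j \<in> {1..n} \<and> \<sigma> \<in> F}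
      \<subseteq> closed_ideal_gen {a (\<sigma> i) (\<sigma> j) - a i j | i j \<sigma>. i \<in> {1..n} \<and> j \<in> {1..n} \<and> \<sigma> \<in> ?G}"
      by (rule subset_trans[OF _ closed_ideal_gen_sub]) (blast intro: perm_group_gen.pg_gen)
    show "{a (\<sigma> i) (\<sigma> j) - a i j | i j \<sigma>. i \<in> {1..n} \<and> j \<in> {1..n} \<and> \<sigma> \<in> ?G}
      \<subseteq> closed_ideal_gen {a (\<sigma> i) (\<sigma> j) - a i j | i j \<sigma>. i \<in> {1..n} \<and> j \<in> {1..n} \<and> \<sigma> \<in> F}"
    proof clarify
      fix i j \<sigma> assume h: "i \<in> {1..n}" "j \<in> {1..n}" "\<sigma> \<in> ?G"
      show "a (\<sigma> i) (\<sigma> j) - a i j \<in> closed_ideal_gen {a (\<sigma> i) (\<sigma> j) - a i j | i j \<sigma>. i \<in> {1..n} \<and> j \<in> {1..n} \<and> \<sigma> \<in> F}"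
        using pg_in[OF assms(2) h(3)] h(1,2) by blast
    qed
  qed
  have 5: "qcomm_ideal n F a = qcomm_ideal n ?G a" using 2 4 3 by (simp only:)
  show ?thesis using 1 2 5 by (intro conjI)
qed

end
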